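(* Let $\mathcal A$ be a regular multiplier Hopf algebroid with a modular base weight $(\mu_B,\mu_C)$ and antipode $S$. Let $\phi$ be a left integral and $\psi$ a right integral for $(\mathcal A,\mu_B,\mu_C)$. Then for all $a\in A$, $x\in B$, $y\in C$: $$\phi(ya)=\phi(a\,S^2(y))\qquad\text{and}\qquad \psi(ax)=\psi(S^2(x)\,a).$$
   Context: A regular multiplier Hopf algebroid $\mathcal A=(A,B,C,S_B,S_C,\Delta_B,\Delta_C)$ (Timmermann–Van Daele) consists of a non-degenerate idempotent complex algebra $A$, non-degenerate idempotent commuting subalgebras $B,C\subseteq M(A)$, anti-isomorphisms $S_B:B\to C$, $S_C:C\to B$, a left comultiplication $\Delta_B$ and right comultiplication $\Delta_C$ satisfying the axioms of that notion; its antipode $S$ is an anti-automorphism of $A$ extending to $M(A)$ with $S|_B=S_B$, $S|_C=S_C$. ${}_BA\otimes A^B$ is the quotient of $A\otimes A$ by the span of $xa\otimes b-a\otimes S_B(x)b$; slice maps: for $\omega:A\to B$ with $\omega(xa)=x\omega(a)$, $\omega\otimes\iota:c\otimes d\mapsto S_B(\omega(c))d$; for $\omega:A\to B$ with $\omega(S_B(x)a)=\omega(a)x$, $\iota\otimes\omega:c\otimes d\mapsto\omega(d)c$. Partial right integral: linear ${}_B\psi_B:A\to B$ with ${}_B\psi_B(xax')=x{}_B\psi_B(a)x'$ and $({}_B\psi_B\otimes\iota)(\Delta_B(a)(1\otimes b))={}_B\psi_B(a)b$. Partial left integral: linear ${}_C\phi_C:A\to C$ with ${}_C\phi_C(yay')=y{}_C\phi_C(a)y'$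 and $(\iota\otimes S_B^{-1}\circ{}_C\phi_C)(\Delta_B(b)(a\otimes1))={}_C\phi_C(b)a$. A base weight is a pair $(\mu_B,\mu_C)$ of faithful linear functionals on $B$, $C$; it is modular if $\mu_B(xx')=\mu_B(x'\,S_B^{-1}S_C^{-1}(x))$ and $\mu_C(yy')=\mu_C(y'\,S_BS_C(y))$ for all $x,x'\in B$, $y,y'\in C$. A functional $\omega$ on $A$ is factorizable if there are linear ${}_B\omega,\omega_B:A\to B$, ${}_C\omega,\omega_C:A\to C$ with ${}_B\omega(xa)=x{}_B\omega(a)$, $\omega_B(ax)=\omega_B(a)x$, ${}_C\omega(ya)=y{}_C\omega(a)$, $\omega_C(ay)=\omega_C(a)y$ and $\omega=\mu_B\circ{}_B\omega=\mu_B\circ\omega_B=\mu_C\circ{}_C\omega=\mu_C\circ\omega_C$. A left integral is a factorizable functional $\mu_C\circ{}_C\phi_C$ with ${}_C\phi_C$ a partial left integral; a right integral is a factorizable functional $\mu_B\circ{}_B\psi_B$ with ${}_B\psi_B$ a partial right integral. *)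

theory Defs
  imports Main Complex_Main
begin

text \<open>Ambient: a unital ring 'm with a complex scalar multiplication sc making it a
complex algebra. 'm plays the role of the multiplier algebra M(A); A is a subset of 'm.\<close>

definition cplx_alg :: "(complex \<Rightarrow> 'm::ring_1 \<Rightarrow> 'm) \<Rightarrow> bool" where
  "cplx_alg sc \<longleftrightarrow> module sc \<and>
     (\<forall>c x y. sc c (x * y) = sc c x * y \<and> sc c (x * y) = x * sc c y)"

definition subalg :: "(complex \<Rightarrow> 'm::ring_1 \<Rightarrow> 'm) \<Rightarrow> 'm set \<Rightarrow> bool" where
  "subalg sc X \<longleftrightarrow> module.subspace sc X \<and> (\<forall>x\<in>X. \<forall>y\<in>X. x * y \<in> X)"

definition idempotent_alg :: "(complex \<Rightarrow> 'm::ring_1 \<Rightarrow> 'm) \<Rightarrow> 'm set \<Rightarrow> bool" where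
  "idempotent_alg sc X \<longleftrightarrow> X \<subseteq> module.span sc {x * y | x y. x \<in> X \<and> y \<in> X}"

definition nondeg_alg :: "'m::ring_1 set \<Rightarrow> bool" where
  "nondeg_alg X \<longleftrightarrow> (\<forall>x\<in>X. (\<forall>y\<in>X. x * y = 0) \<longrightarrow> x = 0) \<and>
                     (\<forall>x\<in>X. (\<forall>y\<in>X. y * x = 0) \<longrightarrow> x = 0)"

text \<open>'m is (isomorphic to) the multiplier algebra M(A) of the non-degenerate idempotent
algebra A: A is a two-sided ideal of 'm, essential on both sides (so the canonical
map 'm -> double centralizers is injective), and every double centralizer (l,r) of A
is given by an element of 'm (surjectivity).\<close>

definition is_multiplier_algebra :: "(complex \<Rightarrow> 'm::ring_1 \<Rightarrow> 'm) \<Rightarrow> 'm set \<Rightarrow> bool" where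
  "is_multiplier_algebra sc A \<longleftrightarrow>
     cplx_alg sc \<and> subalg sc A \<and> nondeg_alg A \<and> idempotent_alg sc A \<and>
     (\<forall>m. \<forall>a\<in>A. m * a \<in> A \<and> a * m \<in> A) \<and>
     (\<forall>m. (\<forall>a\<in>A. m * a = 0) \<longrightarrow> m = 0) \<and>
     (\<forall>m. (\<forall>a\<in>A. a * m = 0) \<longrightarrow> m = 0) \<and>
     (\<forall>l r. (\<forall>a\<in>A. l a \<in> A \<and> r a \<in> A) \<and> (\<forall>a\<in>A. \<forall>b\<in>A. a * l b = r a * b)
        \<longrightarrow> (\<exists>m. \<forall>a\<in>A. l a = m * a \<and> r a = a * m))"

definition lin_fun :: "(complex \<Rightarrow> 'm::ring_1 \<Rightarrow> 'm) \<Rightarrow> 'm set \<Rightarrow> ('m \<Rightarrow> complex) \<Rightarrow> bool" where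
  "lin_fun sc X f \<longleftrightarrow> (\<forall>x\<in>X. \<forall>y\<in>X. f (x + y) = f x + f y) \<and> (\<forall>c. \<forall>x\<in>X. f (sc c x) = c * f x)"

definition lin_map :: "(complex \<Rightarrow> 'm::ring_1 \<Rightarrow> 'm) \<Rightarrow> 'm set \<Rightarrow> 'm set \<Rightarrow> ('m \<Rightarrow> 'm) \<Rightarrow> bool" where
  "lin_map sc X Y f \<longleftrightarrow> (\<forall>x\<in>X. f x \<in> Y) \<and> (\<forall>x\<in>X. \<forall>y\<in>X. f (x + y) = f x + f y) \<and>
     (\<forall>c. \<forall>x\<in>X. f (sc c x) = sc c (f x))"

definition anti_iso :: "(complex \<Rightarrow> 'm::ring_1 \<Rightarrow> 'm) \<Rightarrow> 'm set \<Rightarrow> 'm set \<Rightarrow> ('m \<Rightarrow> 'm) \<Rightarrow> bool" where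
  "anti_iso sc X Y f \<longleftrightarrow> lin_map sc X Y f \<and> bij_betw f X Y \<and>
     (\<forall>x\<in>X. \<forall>y\<in>X. f (x * y) = f y * f x)"

definition base_data ::
  "(complex \<Rightarrow> 'm::ring_1 \<Rightarrow> 'm) \<Rightarrow> 'm set \<Rightarrow> 'm set \<Rightarrow> 'm set \<Rightarrow>
   ('m \<Rightarrow> 'm) \<Rightarrow> ('m \<Rightarrow> 'm) \<Rightarrow> ('m \<Rightarrow> 'm) \<Rightarrow> bool" where
  "base_data sc A B C SB SC S \<longleftrightarrow>
     is_multiplier_algebra sc A \<and>
     subalg sc B \<and> nondeg_alg B \<and> idempotent_alg sc B \<and>
     subalg sc C \<and> nondeg_alg C \<and> idempotent_alg sc C \<and>
     (\<forall>x\<in>B. \<forall>y\<in>C. x * y = y * x) \<and>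
     anti_iso sc B C SB \<and> anti_iso sc C B SC \<and>
     anti_iso sc UNIV UNIV S \<and> S ` A = A \<and>
     (\<forall>x\<in>B. S x = SB x) \<and> (\<forall>y\<in>C. S y = SC y)"

definition faithful_fun :: "(complex \<Rightarrow> 'm::ring_1 \<Rightarrow> 'm) \<Rightarrow> 'm set \<Rightarrow> ('m \<Rightarrow> complex) \<Rightarrow> bool" where
  "faithful_fun sc X mu \<longleftrightarrow> lin_fun sc X mu \<and>
     (\<forall>x\<in>X. (\<forall>y\<in>X. mu (x * y) = 0) \<longrightarrow> x = 0) \<and>
     (\<forall>x\<in>X. (\<forall>y\<in>X. mu (y * x) = 0) \<longrightarrow> x = 0)"

definition modular_base_weight ::
  "(complex \<Rightarrow> 'm::ring_1 \<Rightarrow> 'm) \<Rightarrow> 'm set \<Rightarrow> 'm set \<Rightarrow> ('m \<Rightarrow> 'm) \<Rightarrow> ('m \<Rightarrow> 'm) \<Rightarrow>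
   ('m \<Rightarrow> complex) \<Rightarrow> ('m \<Rightarrow> complex) \<Rightarrow> bool" where
  "modular_base_weight sc B C SB SC muB muC \<longleftrightarrow>
     faithful_fun sc B muB \<and> faithful_fun sc C muC \<and>
     (\<forall>x\<in>B. \<forall>x'\<in>B. muB (x * x') = muB (x' * the_inv_into B SB (the_inv_into C SC x))) \<and>
     (\<forall>y\<in>C. \<forall>y'\<in>C. muC (y * y') = muC (y' * SB (SC y)))"

definition factorizable ::
  "(complex \<Rightarrow> 'm::ring_1 \<Rightarrow> 'm) \<Rightarrow> 'm set \<Rightarrow> 'm set \<Rightarrow> 'm set \<Rightarrow>
   ('m \<Rightarrow> complex) \<Rightarrow> ('m \<Rightarrow> complex) \<Rightarrow> ('m \<Rightarrow> complex) \<Rightarrow> bool" where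
  "factorizable sc A B C muB muC om \<longleftrightarrow> lin_fun sc A om \<and>
     (\<exists>Bom omB Com omC.
        lin_map sc A B Bom \<and> lin_map sc A B omB \<and> lin_map sc A C Com \<and> lin_map sc A C omC \<and>
        (\<forall>x\<in>B. \<forall>a\<in>A. Bom (x * a) = x * Bom a \<and> omB (a * x) = omB a * x) \<and>
        (\<forall>y\<in>C. \<forall>a\<in>A. Com (y * a) = y * Com a \<and> omC (a * y) = omC a * y) \<and>
        (\<forall>a\<in>A. om a = muB (Bom a) \<and> om a = muB (omB a) \<and>
                 om a = muC (Com a) \<and> om a = muC (omC a)))"

text \<open>Elements of the balanced tensor product B-A-tensor-A-B are represented by finite
formal sums (lists of pairs c_i (x) d_i); the slice maps are evaluated on representatives
(they are well defined on the quotient by the module properties of the slicing map).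
DBr a b represents Delta_B(a)(1 (x) b); DBl b a represents Delta_B(b)(a (x) 1).\<close>

definition partial_right_integral ::
  "'m::ring_1 set \<Rightarrow> 'm set \<Rightarrow> ('m \<Rightarrow> 'm) \<Rightarrow> (complex \<Rightarrow> 'm \<Rightarrow> 'm) \<Rightarrow>
   ('m \<Rightarrow> 'm \<Rightarrow> ('m \<times> 'm) list) \<Rightarrow> ('m \<Rightarrow> 'm) \<Rightarrow> bool" where
  "partial_right_integral A B SB sc DBr psiB \<longleftrightarrow> lin_map sc A B psiB \<and>
     (\<forall>x\<in>B. \<forall>a\<in>A. psiB (x * a) = x * psiB a \<and> psiB (a * x) = psiB a * x) \<and>
     (\<forall>a\<in>A. \<forall>b\<in>A. (\<Sum>(c, d)\<leftarrow>DBr a b. SB (psiB c) * d) = psiB a * b)"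

definition partial_left_integral ::
  "'m::ring_1 set \<Rightarrow> 'm set \<Rightarrow> 'm set \<Rightarrow> ('m \<Rightarrow> 'm) \<Rightarrow> (complex \<Rightarrow> 'm \<Rightarrow> 'm) \<Rightarrow>
   ('m \<Rightarrow> 'm \<Rightarrow> ('m \<times> 'm) list) \<Rightarrow> ('m \<Rightarrow> 'm) \<Rightarrow> bool" where
  "partial_left_integral A B C SB sc DBl phiC \<longleftrightarrow> lin_map sc A C phiC \<and>
     (\<forall>y\<in>C. \<forall>a\<in>A. phiC (y * a) = y * phiC a \<and> phiC (a * y) = phiC a * y) \<and>
     (\<forall>b\<in>A. \<forall>a\<in>A. (\<Sum>(c, d)\<leftarrow>DBl b a. the_inv_into B SB (phiC d) * c) = phiC b * a)"

definition left_integral where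
  "left_integral sc A B C SB muB muC DBl phi \<longleftrightarrow> factorizable sc A B C muB muC phi \<and>
     (\<exists>phiC. partial_left_integral A B C SB sc DBl phiC \<and> (\<forall>a\<in>A. phi a = muC (phiC a)))"

definition right_integral where
  "right_integral sc A B C SB muB muC DBr psi \<longleftrightarrow> factorizable sc A B C muB muC psi \<and>
     (\<exists>psiB. partial_right_integral A B SB sc DBr psiB \<and> (\<forall>a\<in>A. psi a = muB (psiB a)))"

end

theory Submission
  imports Defs
begin

theorem lemma4p10:
  fixes sc :: "complex \<Rightarrow> 'm::ring_1 \<Rightarrow> 'm"
    and A B C :: "'m set"
    and SB SC S :: "'m \<Rightarrow> 'm"
    and DBr DBl :: "'m \<Rightarrow> 'm \<Rightarrow> ('m \<times> 'm) list"
    and muB muC phi psi :: "'m \<Rightarrow> complex"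
  assumes "base_data sc A B C SB SC S"
    and "\<forall>a\<in>A. \<forall>b\<in>A. set (DBr a b) \<subseteq> A \<times> A \<and> set (DBl a b) \<subseteq> A \<times> A"
    and "modular_base_weight sc B C SB SC muB muC"
    and "left_integral sc A B C SB muB muC DBl phi"
    and "right_integral sc A B C SB muB muC DBr psi"
  shows "\<forall>a\<in>A. \<forall>x\<in>B. \<forall>y\<in>C.
           phi (y * a) = phi (a * S (S y)) \<and> psi (a * x) = psi (S (S x) * a)"
proof (intro ballI conjI)
  fix a x y assume a: "a \<in> A" and x: "x \<in> B" and y: "y \<in> C"
  have bd: "is_multiplier_algebra sc A" "anti_iso sc B C SB" "anti_iso sc C B SC"
     "\<forall>x\<in>B. S x = SB x" "\<forall>y\<in>C. S y = SC y"
    using assms(1) unfolding base_data_def by auto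
  have mult: "\<forall>m. \<forall>a\<in>A. m * a \<in> A \<and> a * m \<in> A"
    using bd(1) unfolding is_multiplier_algebra_def by blast
  have SBm: "\<forall>x\<in>B. SB x \<in> C" and SBi: "inj_on SB B"
    using bd(2) unfolding anti_iso_def lin_map_def bij_betw_def by auto
  have SCm: "\<forall>x\<in>C. SC x \<in> B" and SCi: "inj_on SC C"
    using bd(3) unfolding anti_iso_def lin_map_def bij_betw_def by auto
  have mw1: "\<forall>x\<in>B. \<forall>x'\<in>B. muB (x * x') = muB (x' * the_inv_into B SB (the_inv_into C SC x))"
   and mw2: "\<forall>y\<in>C. \<forall>y'\<in>C. muC (y * y') = muC (y' * SB (SC y))"
    using assms(3) unfolding modular_base_weight_def by auto
  obtain phiC where pc: "partial_left_integral A B C SB sc DBl phiC" and pe: "\<forall>a\<in>A. phi a = muC (phiC a)"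
    using assms(4) unfolding left_integral_def by blast
  obtain psiB where pb: "partial_right_integral A B SB sc DBr psiB" and pse: "\<forall>a\<in>A. psi a = muB (psiB a)"
    using assms(5) unfolding right_integral_def by blast
  have pcm: "\<forall>a\<in>A. phiC a \<in> C" and pcb: "\<forall>y\<in>C. \<forall>a\<in>A. phiC (y * a) = y * phiC a \<and> phiC (a * y) = phiC a * y"
    using pc unfolding partial_left_integral_def lin_map_def by auto
  have pbm: "\<forall>a\<in>A. psiB a \<in> B" and pbb: "\<forall>x\<in>B. \<forall>a\<in>A. psiB (x * a) = x * psiB a \<and> psiB (a * x) = psiB a * x"
    using pb unfolding partial_right_integral_def lin_map_def by auto
  have SSy: "S (S y) = SB (SC y)" using bd(4,5) y SCm by auto
  have SSyC: "SB (SC y) \<in> C" using SBm SCm y by auto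
  have "phi (y * a) = muC (y * phiC a)" using pe pcb mult a y by auto
  also have "\<dots> = muC (phiC a * SB (SC y))" using mw2 y pcm a by auto
  also have "\<dots> = phi (a * S (S y))" using pe pcb mult a SSy SSyC by auto
  finally show "phi (y * a) = phi (a * S (S y))" .
  have SSx: "S (S x) = SC (SB x)" using bd(4,5) x SBm by auto
  have SSxB: "SC (SB x) \<in> B" using SBm SCm x by auto
  have inv: "the_inv_into B SB (the_inv_into C SC (SC (SB x))) = x"
    using the_inv_into_f_f[OF SCi] the_inv_into_f_f[OF SBi] SBm x by auto
  have "psi (a * x) = muB (psiB a * x)" using pse pbb mult a x by auto
  also have "\<dots> = muB (SC (SB x) * psiB a)" using mw1 SSxB pbm a inv by metis
  also have "\<dots> = psi (S (S x) * a)" using pse pbb mult a SSx SSxB by auto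
  finally show "psi (a * x) = psi (S (S x) * a)" .
qed

end
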